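(* Let $(T_1,T_2)$ be a commuting pair of contractions on a complex Banach space $\mathbb X$ such that for $i=1,2$ the function $A_{T_i}(x)=(\|x\|^2-\|T_ix\|^2)^{1/2}$ defines a norm on $\mathbb X$. Put $\mathbb X_i=(\mathbb X,A_{T_i})$ for $i=1,2$, and consider the subspaces of $\mathbb X_1\oplus_2\mathbb X_2$ $$\widehat M_1=\{(T_2x,x):x\in\mathbb X\},\qquad \widehat M_2=\{(x,T_1x):x\in\mathbb X\}.$$ Suppose $\|T_1T_2\|<1$. Then: (i) with $T=T_1T_2$, the function $A_T(x)=(\|x\|^2-\|Tx\|^2)^{1/2}$ defines a norm on $\mathbb X$; (ii) $\widehat M_1$ and $\widehat M_2$ are closed in $\mathbb X_1\oplus_2\mathbb X_2$ and $\widehat M_1\cap\widehat M_2=\{\mathbf 0\}$; (iii) if there exist subspaces $\mathbb Y_1,\mathbb Y_2$ of $\mathbb X_1\oplus_2\mathbb X_2$ and a surjective linear isometry $\mathbb Y_1\to\mathbb Y_2$ such that $\widehat M_1\oplus_2\mathbb Y_1=\mathbb X_1\oplus_2\mathbb X_2=\widehat M_2\oplus_2\mathbb Y_2$, then there is a unitary $S$ on $\mathbb X_1\oplus_2\mathbb X_2$ with $S(\widehat M_1)=\widehat M_2$, more precisely $S(T_2x,x)=(x,T_1x)$ for all $x\in\mathbb X$.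
   Context: For a contraction $T$ on a normed space $\mathbb X$, $A_T:\mathbb X\to[0,\infty)$ is $A_T(x)=(\|x\|^2-\|Tx\|^2)^{1/2}$; "$A_T$ defines a norm" means $A_T$ is a norm on the vector space $\mathbb X$, and $(\mathbb X,A_T)$ denotes $\mathbb X$ equipped with this norm. $\mathbb X_1\oplus_2\mathbb X_2$ is the space of pairs with norm $\|(x_1,x_2)\|=(\|x_1\|^2+\|x_2\|^2)^{1/2}$. A unitary on a normed space is a surjective linear isometry. For subspaces $M,Y$ of a normed space $Z$, $M\oplus_2 Y=Z$ means every $z\in Z$ is uniquely $z=m+y$ with $m\in M$, $y\in Y$, and $\|m+y\|^2=\|m\|^2+\|y\|^2$ for all $m\in M,y\in Y$. *)

theory Defs
  imports "HOL-Analysis.Analysis"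
begin

class complex_vector = real_vector +
  fixes scaleC :: "complex \<Rightarrow> 'a \<Rightarrow> 'a" (infixr "*\<^sub>C" 75)
  assumes scaleC_add_right: "a *\<^sub>C (x + y) = a *\<^sub>C x + a *\<^sub>C y"
    and scaleC_add_left: "(a + b) *\<^sub>C x = a *\<^sub>C x + b *\<^sub>C x"
    and scaleC_scaleC: "a *\<^sub>C (b *\<^sub>C x) = (a * b) *\<^sub>C x"
    and scaleC_one: "1 *\<^sub>C x = x"
    and scaleR_scaleC: "scaleR r x = complex_of_real r *\<^sub>C x"

class complex_normed_vector = complex_vector + real_normed_vector +
  assumes norm_scaleC: "norm (a *\<^sub>C x) = cmod a * norm x"

instantiation prod :: (complex_vector, complex_vector) complex_vector
begin
definition scaleC_prod_def: "a *\<^sub>C p = (a *\<^sub>C fst p, a *\<^sub>C snd p)"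
instance
  by standard (auto simp: scaleC_prod_def scaleC_add_right scaleC_add_left
      scaleC_scaleC complex_vector_class.scaleC_one scaleR_scaleC prod_eq_iff scaleR_prod_def)
end

definition clinear_map :: "('a::complex_vector \<Rightarrow> 'b::complex_vector) \<Rightarrow> bool" where
  "clinear_map T \<longleftrightarrow> (\<forall>x y. T (x + y) = T x + T y) \<and> (\<forall>c x. T (c *\<^sub>C x) = c *\<^sub>C T x)"

definition contraction :: "('a::complex_normed_vector \<Rightarrow> 'a) \<Rightarrow> bool" where
  "contraction T \<longleftrightarrow> clinear_map T \<and> (\<forall>x. norm (T x) \<le> norm x)"

definition defect :: "('a::complex_normed_vector \<Rightarrow> 'a) \<Rightarrow> 'a \<Rightarrow> real" where
  "defect T x = sqrt ((norm x)\<^sup>2 - (norm (T x))\<^sup>2)"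

definition is_norm :: "('a::complex_vector \<Rightarrow> real) \<Rightarrow> bool" where
  "is_norm N \<longleftrightarrow> (\<forall>x. 0 \<le> N x) \<and> (\<forall>x. N x = 0 \<longleftrightarrow> x = 0)
     \<and> (\<forall>x y. N (x + y) \<le> N x + N y) \<and> (\<forall>c x. N (c *\<^sub>C x) = cmod c * N x)"

definition sum2_norm :: "('a::complex_normed_vector \<Rightarrow> 'a) \<Rightarrow> ('a \<Rightarrow> 'a) \<Rightarrow> 'a \<times> 'a \<Rightarrow> real" where
  "sum2_norm T1 T2 p = sqrt ((defect T1 (fst p))\<^sup>2 + (defect T2 (snd p))\<^sup>2)"

definition closed_wrt :: "('a::complex_vector \<Rightarrow> real) \<Rightarrow> 'a set \<Rightarrow> bool" where
  "closed_wrt N M \<longleftrightarrow>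
     (\<forall>f z. (\<forall>n. f n \<in> M) \<and> (\<lambda>n. N (f n - z)) \<longlonglongrightarrow> 0 \<longrightarrow> z \<in> M)"

definition csubspace_set :: "'a::complex_vector set \<Rightarrow> bool" where
  "csubspace_set S \<longleftrightarrow> 0 \<in> S \<and> (\<forall>x\<in>S. \<forall>y\<in>S. x + y \<in> S) \<and> (\<forall>c. \<forall>x\<in>S. c *\<^sub>C x \<in> S)"

definition orth_sum_eq :: "('a::complex_vector \<Rightarrow> real) \<Rightarrow> 'a set \<Rightarrow> 'a set \<Rightarrow> bool" where
  "orth_sum_eq N M Y \<longleftrightarrow>
     (\<forall>z. \<exists>!p. fst p \<in> M \<and> snd p \<in> Y \<and> z = fst p + snd p) \<and>
     (\<forall>m\<in>M. \<forall>y\<in>Y. (N (m + y))\<^sup>2 = (N m)\<^sup>2 + (N y)\<^sup>2)"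

definition surj_lin_isometry_on :: "('a::complex_vector \<Rightarrow> real) \<Rightarrow> 'a set \<Rightarrow> 'a set \<Rightarrow> ('a \<Rightarrow> 'a) \<Rightarrow> bool" where
  "surj_lin_isometry_on N Y1 Y2 U \<longleftrightarrow> U ` Y1 = Y2 \<and>
     (\<forall>x\<in>Y1. \<forall>y\<in>Y1. U (x + y) = U x + U y) \<and> (\<forall>c. \<forall>x\<in>Y1. U (c *\<^sub>C x) = c *\<^sub>C U x) \<and>
     (\<forall>x\<in>Y1. N (U x) = N x)"

definition unitary_wrt :: "('a::complex_vector \<Rightarrow> real) \<Rightarrow> ('a \<Rightarrow> 'a) \<Rightarrow> bool" where
  "unitary_wrt N S \<longleftrightarrow> clinear_map S \<and> surj S \<and> (\<forall>x. N (S x) = N x)"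

end

theory Submission
  imports Defs
begin

lemma cl_zero: "clinear_map T \<Longrightarrow> T 0 = 0"
  unfolding clinear_map_def by (metis add_cancel_right_right add_0)

lemma cl_diff: "clinear_map T \<Longrightarrow> T (x - y) = T x - T y"
  unfolding clinear_map_def by (metis add_diff_cancel diff_add_cancel)

lemma cl_scaleR: "clinear_map T \<Longrightarrow> T (scaleR r x) = scaleR r (T x)"
  unfolding clinear_map_def by (simp add: scaleR_scaleC)

lemma neg_scaleC: "- (x::'a::complex_vector) = (-1) *\<^sub>C x"
  by (metis scaleR_minus1_left scaleR_scaleC of_real_1 of_real_minus)

lemma isn_nonneg: "is_norm N \<Longrightarrow> 0 \<le> N x"
  unfolding is_norm_def by blast

lemma isn_zero: "is_norm N \<Longrightarrow> N x = 0 \<longleftrightarrow> x = 0"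
  unfolding is_norm_def by blast

lemma isn_tri: "is_norm N \<Longrightarrow> N (x + y) \<le> N x + N y"
  unfolding is_norm_def by blast

lemma isn_scale: "is_norm N \<Longrightarrow> N (c *\<^sub>C x) = cmod c * N x"
  unfolding is_norm_def by blast

lemma isn_sym: "is_norm N \<Longrightarrow> N (x - y) = N (y - x)"
proof -
  assume n: "is_norm N"
  have "y - x = (-1) *\<^sub>C (x - y)" by (metis minus_diff_eq neg_scaleC)
  then show ?thesis using isn_scale[OF n, of "-1" "x - y"] by simp
qed

lemma isn_tri3: "is_norm N \<Longrightarrow> N (x - y) \<le> N (x - z) + N (z - y)"
  using isn_tri[of N "x - z" "z - y"] by simp

lemma defect_sq: "contraction T \<Longrightarrow> (defect T x)\<^sup>2 = (norm x)\<^sup>2 - (norm (T x))\<^sup>2"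
  unfolding defect_def contraction_def
  by (simp add: power_mono)

lemma defect_nonneg: "contraction T \<Longrightarrow> 0 \<le> defect T x"
  unfolding defect_def contraction_def
  by (simp add: power_mono)

lemma defect_le: "contraction T \<Longrightarrow> defect T x \<le> norm x"
  unfolding defect_def contraction_def
  by (simp add: real_sqrt_le_iff' )

lemma is_norm_comb:
  assumes P: "is_norm P" and Q: "is_norm Q" and R: "clinear_map R"
  shows "is_norm (\<lambda>x. sqrt ((P (R x))\<^sup>2 + (Q x)\<^sup>2))"
  unfolding is_norm_def
proof (intro conjI allI)
  fix x show "0 \<le> sqrt ((P (R x))\<^sup>2 + (Q x)\<^sup>2)" by simp
next
  fix x show "(sqrt ((P (R x))\<^sup>2 + (Q x)\<^sup>2) = 0) = (x = 0)"
    using isn_zero[OF Q, of x] isn_zero[OF P, of 0] cl_zero[OF R]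
    by (auto simp: add_nonneg_eq_0_iff)
next
  fix x y
  have a: "R (x + y) = R x + R y" using R unfolding clinear_map_def by blast
  have "(P (R (x + y)))\<^sup>2 \<le> (P (R x) + P (R y))\<^sup>2"
    unfolding a by (rule power_mono[OF isn_tri[OF P]]) (simp add: isn_nonneg[OF P])
  moreover have "(Q (x + y))\<^sup>2 \<le> (Q x + Q y)\<^sup>2"
    by (rule power_mono[OF isn_tri[OF Q]]) (simp add: isn_nonneg[OF Q])
  ultimately have "sqrt ((P (R (x + y)))\<^sup>2 + (Q (x + y))\<^sup>2) \<le> sqrt ((P (R x) + P (R y))\<^sup>2 + (Q x + Q y)\<^sup>2)"
    by simp
  also have "\<dots> \<le> sqrt ((P (R x))\<^sup>2 + (Q x)\<^sup>2) + sqrt ((P (R y))\<^sup>2 + (Q y)\<^sup>2)"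
    by (rule real_sqrt_sum_squares_triangle_ineq)
  finally show "sqrt ((P (R (x + y)))\<^sup>2 + (Q (x + y))\<^sup>2) \<le> sqrt ((P (R x))\<^sup>2 + (Q x)\<^sup>2) + sqrt ((P (R y))\<^sup>2 + (Q y)\<^sup>2)" .
next
  fix c x
  have a: "R (c *\<^sub>C x) = c *\<^sub>C R x" using R unfolding clinear_map_def by blast
  show "sqrt ((P (R (c *\<^sub>C x)))\<^sup>2 + (Q (c *\<^sub>C x))\<^sup>2) = cmod c * sqrt ((P (R x))\<^sup>2 + (Q x)\<^sup>2)"
    unfolding a isn_scale[OF P] isn_scale[OF Q]
    by (simp add: power_mult_distrib distrib_left [symmetric] real_sqrt_mult)
qed

lemma closed_aux:
  fixes P Q :: "'a::{complex_normed_vector,banach} \<Rightarrow> real" and R :: "'a \<Rightarrow> 'a"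
  assumes nP: "is_norm P" and nQ: "is_norm Q"
   and Pb: "\<And>y. P y \<le> norm y" and Qb: "\<And>y. Q y \<le> norm y"
   and R: "contraction R"
   and coer: "\<And>y. c * norm y \<le> P y + Q (R y)" and c: "c > 0"
   and l1: "(\<lambda>n. P (x n - b)) \<longlonglongrightarrow> 0" and l2: "(\<lambda>n. Q (R (x n) - a)) \<longlonglongrightarrow> 0"
  shows "a = R b"
proof -
  have Rl: "clinear_map R" and Rc: "\<And>y. norm (R y) \<le> norm y" using R unfolding contraction_def by auto
  define e where "e n = P (x n - b) + Q (R (x n) - a)" for n
  have e0: "e \<longlonglongrightarrow> 0" using tendsto_add[OF l1 l2] unfolding e_def[abs_def] by simp
  have bound: "norm (x n - x m) \<le> (e n + e m) / c" for n m
  proof -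
    have "P (x n - x m) \<le> P (x n - b) + P (x m - b)"
      using isn_tri3[OF nP, of "x n" "x m" b] isn_sym[OF nP, of b "x m"] by simp
    moreover have "Q (R (x n - x m)) \<le> Q (R (x n) - a) + Q (R (x m) - a)"
      using isn_tri3[OF nQ, of "R (x n)" "R (x m)" a] isn_sym[OF nQ, of a "R (x m)"] cl_diff[OF Rl]
      by simp
    ultimately have "c * norm (x n - x m) \<le> e n + e m"
      using coer[of "x n - x m"] unfolding e_def by linarith
    then show ?thesis using c by (simp add: field_simps)
  qed
  have "Cauchy x"
    unfolding Cauchy_def
  proof (intro allI impI)
    fix \<epsilon> :: real assume \<epsilon>: "\<epsilon> > 0"
    then have "\<epsilon> * c / 2 > 0" using c by simp
    with e0 have "eventually (\<lambda>n. dist (e n) 0 < \<epsilon> * c / 2) sequentially"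
      unfolding tendsto_iff by blast
    then obtain M where M: "\<And>n. n \<ge> M \<Longrightarrow> dist (e n) 0 < \<epsilon> * c / 2"
      unfolding eventually_sequentially by blast
    show "\<exists>M. \<forall>m\<ge>M. \<forall>n\<ge>M. dist (x m) (x n) < \<epsilon>"
    proof (intro exI allI impI)
      fix m n assume "m \<ge> M" "n \<ge> M"
      then have "e m + e n < \<epsilon> * c" using M[of m] M[of n] by auto
      then have "(e m + e n) / c < \<epsilon>" using c by (simp add: field_simps)
      then show "dist (x m) (x n) < \<epsilon>" using bound[of m n] by (simp add: dist_norm)
    qed
  qed
  then obtain l where xl: "x \<longlonglongrightarrow> l" using Cauchy_convergent_iff convergent_def by blast
  have nl: "(\<lambda>n. norm (x n - l)) \<longlonglongrightarrow> 0"
    by (intro tendsto_norm_zero LIM_zero xl)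
  have "P (b - l) \<le> 0"
  proof (rule LIMSEQ_le_const)
    show "(\<lambda>n. P (x n - b) + norm (x n - l)) \<longlonglongrightarrow> 0" using tendsto_add[OF l1 nl] by simp
    show "\<exists>N. \<forall>n\<ge>N. P (b - l) \<le> P (x n - b) + norm (x n - l)"
    proof (intro exI allI impI)
      fix n
      show "P (b - l) \<le> P (x n - b) + norm (x n - l)"
        using isn_tri3[OF nP, of b l "x n"] isn_sym[OF nP, of b "x n"] Pb[of "x n - l"] by simp
    qed
  qed
  then have "b = l" using isn_nonneg[OF nP, of "b - l"] isn_zero[OF nP, of "b - l"] by simp
  have "Q (a - R l) \<le> 0"
  proof (rule LIMSEQ_le_const)
    show "(\<lambda>n. Q (R (x n) - a) + norm (x n - l)) \<longlonglongrightarrow> 0" using tendsto_add[OF l2 nl] by simp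
    show "\<exists>N. \<forall>n\<ge>N. Q (a - R l) \<le> Q (R (x n) - a) + norm (x n - l)"
    proof (intro exI allI impI)
      fix n
      have "Q (a - R l) \<le> Q (a - R (x n)) + Q (R (x n) - R l)" by (rule isn_tri3[OF nQ])
      moreover have "Q (R (x n) - R l) \<le> norm (x n - l)"
        using Qb[of "R (x n) - R l"] Rc[of "x n - l"] cl_diff[OF Rl, of "x n" l] by simp
      ultimately show "Q (a - R l) \<le> Q (R (x n) - a) + norm (x n - l)"
        using isn_sym[OF nQ, of a "R (x n)"] by simp
    qed
  qed
  then have "a = R l" using isn_nonneg[OF nQ, of "a - R l"] isn_zero[OF nQ, of "a - R l"] by simp
  then show ?thesis using \<open>b = l\<close> by simp
qed

lemma coer_aux:
  fixes k a b t :: real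
  assumes "(1 - k\<^sup>2) * t\<^sup>2 \<le> a\<^sup>2 + b\<^sup>2" "0 \<le> a" "0 \<le> b" "0 \<le> k" "k < 1" "0 \<le> t"
  shows "sqrt (1 - k\<^sup>2) * t \<le> a + b"
proof (rule power2_le_imp_le)
  have k2: "k\<^sup>2 < 1" using assms by (simp add: power_less_one_iff abs_square_less_1)
  have "(sqrt (1 - k\<^sup>2) * t)\<^sup>2 = (1 - k\<^sup>2) * t\<^sup>2" using k2 by (simp add: power_mult_distrib)
  also have "\<dots> \<le> a\<^sup>2 + b\<^sup>2" by fact
  also have "\<dots> \<le> (a + b)\<^sup>2" using assms by (simp add: power2_sum)
  finally show "(sqrt (1 - k\<^sup>2) * t)\<^sup>2 \<le> (a + b)\<^sup>2" .
  show "0 \<le> a + b" using assms by simp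
qed

theorem lemma2p2:
  fixes T1 T2 :: "'a::{complex_normed_vector, banach} \<Rightarrow> 'a"
  assumes c1: "contraction T1" and c2: "contraction T2"
    and comm: "\<forall>x. T1 (T2 x) = T2 (T1 x)"
    and n1: "is_norm (defect T1)" and n2: "is_norm (defect T2)"
    and small: "onorm (T1 \<circ> T2) < 1"
  defines "M1 \<equiv> {(T2 x, x) | x. True}"
    and "M2 \<equiv> {(x, T1 x) | x. True}"
    and "N \<equiv> sum2_norm T1 T2"
  shows "is_norm (defect (T1 \<circ> T2))
    \<and> closed_wrt N M1 \<and> closed_wrt N M2 \<and> M1 \<inter> M2 = {0}
    \<and> ((\<exists>Y1 Y2 U. csubspace_set Y1 \<and> csubspace_set Y2 \<and> surj_lin_isometry_on N Y1 Y2 U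
           \<and> orth_sum_eq N M1 Y1 \<and> orth_sum_eq N M2 Y2)
       \<longrightarrow> (\<exists>S. unitary_wrt N S \<and> S ` M1 = M2 \<and> (\<forall>x. S (T2 x, x) = (x, T1 x))))"
proof -
  have l1: "clinear_map T1" and cb1: "\<And>x. norm (T1 x) \<le> norm x" using c1 unfolding contraction_def by auto
  have l2: "clinear_map T2" and cb2: "\<And>x. norm (T2 x) \<le> norm x" using c2 unfolding contraction_def by auto
  have add1: "\<And>x y. T1 (x + y) = T1 x + T1 y" and sc1: "\<And>c x. T1 (c *\<^sub>C x) = c *\<^sub>C T1 x"
    using l1 unfolding clinear_map_def by auto
  have add2: "\<And>x y. T2 (x + y) = T2 x + T2 y" and sc2: "\<And>c x. T2 (c *\<^sub>C x) = c *\<^sub>C T2 x"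
    using l2 unfolding clinear_map_def by auto
  have cl12: "clinear_map (T1 \<circ> T2)" unfolding clinear_map_def by (simp add: add1 add2 sc1 sc2)
  have cb12: "\<And>x. norm (T1 (T2 x)) \<le> norm x" using cb1 cb2 order_trans by blast
  have c12: "contraction (T1 \<circ> T2)" unfolding contraction_def using cl12 cb12 by simp
  have bl: "bounded_linear (T1 \<circ> T2)"
    by (rule bounded_linear_intro[where K=1]) (simp_all add: add1 add2 cl_scaleR[OF l1] cl_scaleR[OF l2] cb12)
  define k where "k = onorm (T1 \<circ> T2)"
  have nk: "\<And>x. norm (T1 (T2 x)) \<le> k * norm x" using onorm[OF bl] unfolding k_def by simp
  have k0: "0 \<le> k" using onorm_pos_le[OF bl] unfolding k_def .
  have k1: "k < 1" using small unfolding k_def .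
  define DT where "DT = defect (T1 \<circ> T2)"
  have DT0: "\<And>x. 0 \<le> DT x" unfolding DT_def using defect_nonneg[OF c12] .
  have key1: "\<And>x. (DT x)\<^sup>2 = (defect T1 (T2 x))\<^sup>2 + (defect T2 x)\<^sup>2"
    unfolding DT_def using defect_sq[OF c12] defect_sq[OF c1] defect_sq[OF c2] by simp
  have key2: "\<And>x. (DT x)\<^sup>2 = (defect T1 x)\<^sup>2 + (defect T2 (T1 x))\<^sup>2"
    unfolding DT_def using defect_sq[OF c12] defect_sq[OF c1] defect_sq[OF c2] comm by simp
  have eqN1: "\<And>x. N (T2 x, x) = DT x"
    unfolding N_def sum2_norm_def using key1 DT0 by (metis fst_conv snd_conv real_sqrt_abs abs_of_nonneg)
  have eqN2: "\<And>x. N (x, T1 x) = DT x"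
    unfolding N_def sum2_norm_def using key2 DT0 by (metis fst_conv snd_conv real_sqrt_abs abs_of_nonneg)
  have N0: "\<And>p. 0 \<le> N p" unfolding N_def sum2_norm_def by simp
  have part1: "is_norm (defect (T1 \<circ> T2))"
  proof -
    have "defect (T1 \<circ> T2) = (\<lambda>x. sqrt ((defect T1 (T2 x))\<^sup>2 + (defect T2 x)\<^sup>2))"
      using key1 DT0 unfolding DT_def by (metis real_sqrt_abs abs_of_nonneg)
    then show ?thesis using is_norm_comb[OF n1 n2 l2] by simp
  qed
  define c where "c = sqrt (1 - k\<^sup>2)"
  have cpos: "c > 0" unfolding c_def using k0 k1 by (simp add: power_less_one_iff abs_square_less_1)
  have nk2: "\<And>y. (1 - k\<^sup>2) * (norm y)\<^sup>2 \<le> (norm y)\<^sup>2 - (norm (T1 (T2 y)))\<^sup>2"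
  proof -
    fix y
    have "(norm (T1 (T2 y)))\<^sup>2 \<le> (k * norm y)\<^sup>2" by (rule power_mono[OF nk]) simp
    then show "(1 - k\<^sup>2) * (norm y)\<^sup>2 \<le> (norm y)\<^sup>2 - (norm (T1 (T2 y)))\<^sup>2"
      by (simp add: power_mult_distrib algebra_simps)
  qed
  have DTsq: "\<And>y. (DT y)\<^sup>2 = (norm y)\<^sup>2 - (norm (T1 (T2 y)))\<^sup>2"
    unfolding DT_def using defect_sq[OF c12] by simp
  have coerA: "\<And>y. c * norm y \<le> defect T2 y + defect T1 (T2 y)"
    unfolding c_def
    by (rule coer_aux) (use nk2 DTsq key1 k0 k1 defect_nonneg[OF c1] defect_nonneg[OF c2] in \<open>auto simp: add.commute\<close>)
  have coerB: "\<And>y. c * norm y \<le> defect T1 y + defect T2 (T1 y)"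
    unfolding c_def
    by (rule coer_aux) (use nk2 DTsq key2 k0 k1 defect_nonneg[OF c1] defect_nonneg[OF c2] in auto)
  have mem1: "\<And>m. m \<in> M1 \<longleftrightarrow> fst m = T2 (snd m)" unfolding M1_def by (auto simp: prod_eq_iff)
  have mem2: "\<And>m. m \<in> M2 \<longleftrightarrow> snd m = T1 (fst m)" unfolding M2_def by (auto simp: prod_eq_iff)
  have Nfst: "\<And>p. defect T1 (fst p) \<le> N p" and Nsnd: "\<And>p. defect T2 (snd p) \<le> N p"
    unfolding N_def sum2_norm_def by simp_all
  have part2: "closed_wrt N M1"
    unfolding closed_wrt_def
  proof (intro allI impI)
    fix f and z :: "'a \<times> 'a"
    assume as: "(\<forall>n. f n \<in> M1) \<and> (\<lambda>n. N (f n - z)) \<longlonglongrightarrow> 0"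
    define x where "x n = snd (f n)" for n
    have la: "(\<lambda>n. defect T1 (T2 (x n) - fst z)) \<longlonglongrightarrow> 0"
    proof (rule Lim_null_comparison[OF _ conjunct2[OF as]])
      show "\<forall>\<^sub>F n in sequentially. norm (defect T1 (T2 (x n) - fst z)) \<le> N (f n - z)"
        using as Nfst[of "f _ - z"] defect_nonneg[OF c1] unfolding x_def mem1
        by (auto intro!: always_eventually)
    qed
    have lb: "(\<lambda>n. defect T2 (x n - snd z)) \<longlonglongrightarrow> 0"
    proof (rule Lim_null_comparison[OF _ conjunct2[OF as]])
      show "\<forall>\<^sub>F n in sequentially. norm (defect T2 (x n - snd z)) \<le> N (f n - z)"
        using as Nsnd[of "f _ - z"] defect_nonneg[OF c2] unfolding x_def mem1
        by (auto intro!: always_eventually)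
    qed
    have "fst z = T2 (snd z)"
      by (rule closed_aux[OF n2 n1 defect_le[OF c2] defect_le[OF c1] c2 coerA cpos lb la])
    then show "z \<in> M1" using mem1 by simp
  qed
  have part3: "closed_wrt N M2"
    unfolding closed_wrt_def
  proof (intro allI impI)
    fix f and z :: "'a \<times> 'a"
    assume as: "(\<forall>n. f n \<in> M2) \<and> (\<lambda>n. N (f n - z)) \<longlonglongrightarrow> 0"
    define x where "x n = fst (f n)" for n
    have la: "(\<lambda>n. defect T1 (x n - fst z)) \<longlonglongrightarrow> 0"
    proof (rule Lim_null_comparison[OF _ conjunct2[OF as]])
      show "\<forall>\<^sub>F n in sequentially. norm (defect T1 (x n - fst z)) \<le> N (f n - z)"
        using as Nfst[of "f _ - z"] defect_nonneg[OF c1] unfolding x_def mem2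
        by (auto intro!: always_eventually)
    qed
    have lb: "(\<lambda>n. defect T2 (T1 (x n) - snd z)) \<longlonglongrightarrow> 0"
    proof (rule Lim_null_comparison[OF _ conjunct2[OF as]])
      show "\<forall>\<^sub>F n in sequentially. norm (defect T2 (T1 (x n) - snd z)) \<le> N (f n - z)"
        using as Nsnd[of "f _ - z"] defect_nonneg[OF c2] unfolding x_def mem2
        by (auto intro!: always_eventually)
    qed
    have "snd z = T1 (fst z)"
      by (rule closed_aux[OF n1 n2 defect_le[OF c1] defect_le[OF c2] c1 coerB cpos la lb])
    then show "z \<in> M2" using mem2 by simp
  qed
  have part4: "M1 \<inter> M2 = {0}"
  proof
    have "(0::'a\<times>'a) = (T2 0, 0)" "(0::'a\<times>'a) = (0, T1 0)"
      by (simp_all add: cl_zero[OF l2] cl_zero[OF l1] zero_prod_def)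
    then show "{0} \<subseteq> M1 \<inter> M2" unfolding M1_def M2_def by blast
    show "M1 \<inter> M2 \<subseteq> {0}"
    proof
      fix z assume z: "z \<in> M1 \<inter> M2"
      then have "fst z = T2 (snd z)" "snd z = T1 (fst z)" using mem1 mem2 by blast+
      then have e: "snd z = T1 (T2 (snd z))" by metis
      have "norm (snd z) \<le> k * norm (snd z)" using nk[of "snd z"] by (subst (1) e)
      then have "(1 - k) * norm (snd z) \<le> 0" by (simp add: algebra_simps)
      moreover have "0 < 1 - k" using k1 by simp
      ultimately have "norm (snd z) \<le> 0" by (simp add: mult_le_0_iff)
      then have "snd z = 0" by simp
      moreover have "fst z = T2 (snd z)" using z mem1 by blast
      ultimately show "z \<in> {0}" using cl_zero[OF l2] by (simp add: prod_eq_iff)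
    qed
  qed
  have part5: "(\<exists>Y1 Y2 U. csubspace_set Y1 \<and> csubspace_set Y2 \<and> surj_lin_isometry_on N Y1 Y2 U
           \<and> orth_sum_eq N M1 Y1 \<and> orth_sum_eq N M2 Y2)
       \<longrightarrow> (\<exists>S. unitary_wrt N S \<and> S ` M1 = M2 \<and> (\<forall>x. S (T2 x, x) = (x, T1 x)))"
  proof
    assume "\<exists>Y1 Y2 U. csubspace_set Y1 \<and> csubspace_set Y2 \<and> surj_lin_isometry_on N Y1 Y2 U
           \<and> orth_sum_eq N M1 Y1 \<and> orth_sum_eq N M2 Y2"
    then obtain Y1 Y2 U where sY1: "csubspace_set Y1" and iso: "surj_lin_isometry_on N Y1 Y2 U"
      and o1: "orth_sum_eq N M1 Y1" and o2: "orth_sum_eq N M2 Y2" by blast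
    have Y10: "0 \<in> Y1" and Y1add: "\<And>x y. x \<in> Y1 \<Longrightarrow> y \<in> Y1 \<Longrightarrow> x + y \<in> Y1"
      and Y1sc: "\<And>c x. x \<in> Y1 \<Longrightarrow> c *\<^sub>C x \<in> Y1"
      using sY1 unfolding csubspace_set_def by auto
    have UY: "U ` Y1 = Y2" and Uadd: "\<And>x y. x \<in> Y1 \<Longrightarrow> y \<in> Y1 \<Longrightarrow> U (x + y) = U x + U y"
      and Usc: "\<And>c x. x \<in> Y1 \<Longrightarrow> U (c *\<^sub>C x) = c *\<^sub>C U x"
      and UN: "\<And>x. x \<in> Y1 \<Longrightarrow> N (U x) = N x"
      using iso unfolding surj_lin_isometry_on_def by auto
    have ex1: "\<And>z. \<exists>!p. fst p \<in> M1 \<and> snd p \<in> Y1 \<and> z = fst p + snd p"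
      and py1: "\<And>m y. m \<in> M1 \<Longrightarrow> y \<in> Y1 \<Longrightarrow> (N (m + y))\<^sup>2 = (N m)\<^sup>2 + (N y)\<^sup>2"
      using o1 unfolding orth_sum_eq_def by blast+
    have ex2: "\<And>z. \<exists>p. fst p \<in> M2 \<and> snd p \<in> Y2 \<and> z = fst p + snd p"
      and py2: "\<And>m y. m \<in> M2 \<Longrightarrow> y \<in> Y2 \<Longrightarrow> (N (m + y))\<^sup>2 = (N m)\<^sup>2 + (N y)\<^sup>2"
      using o2 unfolding orth_sum_eq_def by blast+
    have U0: "U 0 = 0" using Uadd[OF Y10 Y10] by simp
    define dec where "dec z = (THE p. fst p \<in> M1 \<and> snd p \<in> Y1 \<and> z = fst p + snd p)" for z
    define phi :: "'a \<times> 'a \<Rightarrow> 'a \<times> 'a" where "phi m = (snd m, T1 (snd m))" for m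
    define S where "S z = phi (fst (dec z)) + U (snd (dec z))" for z
    have decE: "dec (m + y) = (m, y)" if "m \<in> M1" "y \<in> Y1" for m y
      unfolding dec_def by (rule the1_equality[OF ex1]) (simp add: that)
    have Sform: "S (m + y) = phi m + U y" if "m \<in> M1" "y \<in> Y1" for m y
      unfolding S_def decE[OF that] by simp
    have decomp: "\<exists>m y. m \<in> M1 \<and> y \<in> Y1 \<and> z = m + y" for z
      using ex1[of z] by blast
    have M1add: "m + m' \<in> M1" if "m \<in> M1" "m' \<in> M1" for m m'
      using that mem1 add2 by simp
    have M1sc: "c *\<^sub>C m \<in> M1" if "m \<in> M1" for c m
      using that mem1 sc2 by (simp add: scaleC_prod_def)
    have phiadd: "phi (m + m') = phi m + phi m'" for m m'
      unfolding phi_def by (simp add: add1)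
    have phisc: "phi (c *\<^sub>C m) = c *\<^sub>C phi m" for c m
      unfolding phi_def by (simp add: sc1 scaleC_prod_def)
    have phiM2: "phi m \<in> M2" for m unfolding phi_def mem2 by simp
    have phiN: "N (phi m) = N m" if "m \<in> M1" for m
    proof -
      have "m = (T2 (snd m), snd m)" using that mem1 by (simp add: prod_eq_iff)
      then show ?thesis unfolding phi_def using eqN1 eqN2 by metis
    qed
    have lin: "clinear_map S"
      unfolding clinear_map_def
    proof (intro conjI allI)
      fix z w
      obtain m y where my: "m \<in> M1" "y \<in> Y1" "z = m + y" using decomp by blast
      obtain m' y' where my': "m' \<in> M1" "y' \<in> Y1" "w = m' + y'" using decomp by blast
      have e: "z + w = (m + m') + (y + y')" using my my' by (simp add: algebra_simps)
      have "S (z + w) = phi (m + m') + U (y + y')"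
        unfolding e by (rule Sform[OF M1add[OF my(1) my'(1)] Y1add[OF my(2) my'(2)]])
      also have "\<dots> = (phi m + U y) + (phi m' + U y')"
        using phiadd Uadd my my' by (simp add: algebra_simps)
      also have "\<dots> = S z + S w" using Sform my my' by simp
      finally show "S (z + w) = S z + S w" .
    next
      fix c z
      obtain m y where my: "m \<in> M1" "y \<in> Y1" "z = m + y" using decomp by blast
      have e: "c *\<^sub>C z = c *\<^sub>C m + c *\<^sub>C y" using my by (simp add: scaleC_add_right)
      have "S (c *\<^sub>C z) = phi (c *\<^sub>C m) + U (c *\<^sub>C y)"
        unfolding e by (rule Sform[OF M1sc[OF my(1)] Y1sc[OF my(2)]])
      also have "\<dots> = c *\<^sub>C (phi m + U y)"
        using phisc Usc my by (simp add: scaleC_add_right)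
      also have "\<dots> = c *\<^sub>C S z" using Sform my by simp
      finally show "S (c *\<^sub>C z) = c *\<^sub>C S z" .
    qed
    have su: "surj S"
    proof -
      have "w \<in> range S" for w
      proof -
        obtain p where p: "fst p \<in> M2" "snd p \<in> Y2" "w = fst p + snd p" using ex2 by blast
        obtain y1 where y1: "y1 \<in> Y1" "snd p = U y1" using p UY by blast
        define x where "x = fst (fst p)"
        have m1: "(T2 x, x) \<in> M1" using mem1 by simp
        have "phi (T2 x, x) = fst p" using p mem2 unfolding phi_def x_def by (simp add: prod_eq_iff)
        then have "S ((T2 x, x) + y1) = w" using Sform[OF m1 y1(1)] p y1 by simp
        then show ?thesis by (metis rangeI)
      qed
      then show ?thesis by blast
    qed
    have isoS: "N (S z) = N z" for z
    proof -
      obtain m y where my: "m \<in> M1" "y \<in> Y1" "z = m + y" using decomp by blast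
      have Uy: "U y \<in> Y2" using UY my by blast
      have "(N (S z))\<^sup>2 = (N (phi m))\<^sup>2 + (N (U y))\<^sup>2"
        using Sform my py2[OF phiM2 Uy] by simp
      also have "\<dots> = (N m)\<^sup>2 + (N y)\<^sup>2" using phiN UN my by simp
      also have "\<dots> = (N z)\<^sup>2" using py1 my by simp
      finally show ?thesis using N0 by (simp add: power2_eq_iff_nonneg)
    qed
    have Sx: "S (T2 x, x) = (x, T1 x)" for x
    proof -
      have m1: "(T2 x, x) \<in> M1" using mem1 by simp
      show ?thesis using Sform[OF m1 Y10] U0 unfolding phi_def by simp
    qed
    have img: "S ` M1 = M2"
    proof
      show "S ` M1 \<subseteq> M2" unfolding M1_def M2_def using Sx by auto
      show "M2 \<subseteq> S ` M1"
      proof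
        fix w assume "w \<in> M2"
        then obtain x where "w = (x, T1 x)" unfolding M2_def by blast
        moreover have "(T2 x, x) \<in> M1" using mem1 by simp
        ultimately show "w \<in> S ` M1" using Sx by (metis image_eqI)
      qed
    qed
    show "\<exists>S. unitary_wrt N S \<and> S ` M1 = M2 \<and> (\<forall>x. S (T2 x, x) = (x, T1 x))"
      using lin su isoS img Sx unfolding unitary_wrt_def by blast
  qed
  show ?thesis using part1 part2 part3 part4 part5 by blast
qed

end
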